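(* For any matrices $A\ge 0$ and $B>0$ of the same size, $$\frac{A}{A+B}\le\frac{A}{B}$$ in the Löwner order.
   Context: For a matrix $X$ and a positive definite matrix $C>0$, the matrix quotient is defined as $\frac{X}{C}:=\int_0^\infty (\lambda+C)^{-1}X(\lambda+C)^{-1}\,d\lambda$. $X\le Y$ means $Y-X$ is positive semidefinite. *)

theory Defs
  imports "HOL-Analysis.Analysis"
begin

definition conj_transpose :: "complex^'n^'m \<Rightarrow> complex^'m^'n" where
  "conj_transpose A = (\<chi> i j. cnj (A $ j $ i))"

definition hermitian :: "complex^'n^'n \<Rightarrow> bool" where
  "hermitian A \<longleftrightarrow> conj_transpose A = A"

definition quad_form :: "complex^'n^'n \<Rightarrow> complex^'n \<Rightarrow> complex" where
  "quad_form A x = (\<Sum>i\<in>UNIV. cnj (x $ i) * (A *v x) $ i)"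

definition psd :: "complex^'n^'n \<Rightarrow> bool" where
  "psd A \<longleftrightarrow> hermitian A \<and> (\<forall>x. 0 \<le> Re (quad_form A x))"

definition pd :: "complex^'n^'n \<Rightarrow> bool" where
  "pd A \<longleftrightarrow> hermitian A \<and> (\<forall>x. x \<noteq> 0 \<longrightarrow> 0 < Re (quad_form A x))"

definition loewner_le :: "complex^'n^'n \<Rightarrow> complex^'n^'n \<Rightarrow> bool" where
  "loewner_le X Y \<longleftrightarrow> psd (Y - X)"

definition mat_quot :: "complex^'n^'n \<Rightarrow> complex^'n^'n \<Rightarrow> complex^'n^'n" where
  "mat_quot X C = integral {0::real..}
     (\<lambda>l. matrix_inv (mat (complex_of_real l) + C) ** X ** matrix_inv (mat (complex_of_real l) + C))"

end

theory Submission
  imports Defs "HOL-Real_Asymp.Real_Asymp"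
begin

lemma matrix_add_rdistrib: "((B + C) ** A) = (B ** A) + (C ** A)"
  for A B C :: "'a::semiring_1^'n^'n"
  by (vector matrix_matrix_mult_def sum.distrib[symmetric] field_simps)

lemma matrix_sub_ldistrib: "(A ** (B - C)) = (A ** B) - (A ** C)"
  for A B C :: "'a::ring_1^'n^'n"
  by (vector matrix_matrix_mult_def sum_subtractf[symmetric] field_simps)

lemma matrix_sub_rdistrib: "((B - C) ** A) = (B ** A) - (C ** A)"
  for A B C :: "'a::ring_1^'n^'n"
  by (vector matrix_matrix_mult_def sum_subtractf[symmetric] field_simps)

lemma re_quad_form: "Re (quad_form M x) = inner x (M *v x)"
  by (simp add: quad_form_def inner_vec_def inner_complex_def Re_sum)

lemma ct_mult: "conj_transpose (P ** Q) = conj_transpose Q ** conj_transpose P"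
  for P Q :: "complex^'n^'n"
  by (simp add: conj_transpose_def matrix_matrix_mult_def vec_eq_iff mult.commute)

lemma ct_add: "conj_transpose (P + Q) = conj_transpose P + conj_transpose Q"
  by (simp add: conj_transpose_def vec_eq_iff)

lemma ct_diff: "conj_transpose (P - Q) = conj_transpose P - conj_transpose Q"
  by (simp add: conj_transpose_def vec_eq_iff)

lemma ct_scaleR: "conj_transpose (r *\<^sub>R P) = r *\<^sub>R conj_transpose P"
  by (simp add: conj_transpose_def vec_eq_iff)

lemma ct_mat: "conj_transpose (mat c :: complex^'n^'n) = mat (cnj c)"
  by (simp add: conj_transpose_def vec_eq_iff mat_def)

lemma quad_form_adj:
  fixes X M :: "complex^'n^'n"
  shows "quad_form (conj_transpose X ** M ** X) x = quad_form M (X *v x)"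
proof -
  define y where "y = M *v (X *v x)"
  have "quad_form (conj_transpose X ** M ** X) x = (\<Sum>i\<in>UNIV. cnj (x $ i) * (conj_transpose X *v y) $ i)"
    by (simp add: quad_form_def y_def matrix_vector_mul_assoc matrix_mul_assoc)
  also have "\<dots> = (\<Sum>i\<in>UNIV. \<Sum>j\<in>UNIV. cnj (x $ i) * cnj (X $ j $ i) * y $ j)"
    by (simp add: conj_transpose_def matrix_vector_mult_def sum_distrib_left mult.assoc)
  also have "\<dots> = (\<Sum>j\<in>UNIV. \<Sum>i\<in>UNIV. cnj (x $ i) * cnj (X $ j $ i) * y $ j)"
    by (rule sum.swap)
  also have "\<dots> = quad_form M (X *v x)"
    by (simp add: quad_form_def y_def matrix_vector_mult_def sum_distrib_right mult_ac)
  finally show ?thesis .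
qed

lemma mat_vec: "(mat c :: 'a::semiring_1^'n^'n) *v x = c *s x"
  by (simp add: vec_eq_iff matrix_vector_mult_def mat_def if_distrib if_distribR cong: if_cong)

lemma inv_props:
  fixes C :: "'a::field^'n^'n"
  assumes "invertible C"
  shows "C ** matrix_inv C = mat 1" "matrix_inv C ** C = mat 1"
  using someI_ex[OF assms[unfolded invertible_def]] unfolding matrix_inv_def by auto

lemma hermitian_inv:
  fixes C :: "complex^'n^'n"
  assumes "invertible C" "hermitian C"
  shows "hermitian (matrix_inv C)"
proof -
  let ?R = "matrix_inv C"
  have "conj_transpose ?R ** C = mat 1"
    using ct_mult[of C ?R] inv_props(1)[OF assms(1)] assms(2)
    by (simp add: hermitian_def ct_mat)
  then have "conj_transpose ?R = conj_transpose ?R ** (C ** ?R)"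
    using inv_props(1)[OF assms(1)] by simp
  also have "\<dots> = ?R" using \<open>conj_transpose ?R ** C = mat 1\<close> by (simp add: matrix_mul_assoc)
  finally show ?thesis by (simp add: hermitian_def)
qed

lemma ofreal_smult: "(complex_of_real l) *s (x::complex^'n) = l *\<^sub>R x"
  by (simp add: vec_eq_iff) (simp add: scaleR_conv_of_real)

lemma mv_scaleR: "(B::complex^'n^'n) *v (r *\<^sub>R y) = r *\<^sub>R (B *v y)"
  by (simp add: vec_eq_iff matrix_vector_mult_def scaleR_sum_right)

lemma norm_axis_c [simp]: "norm (axis i (1::complex)) = 1"
  by (simp add: inner_axis' norm_eq_1)

lemma inner_shift:
  "inner x ((mat (complex_of_real l) + C) *v x) = l * (norm x)^2 + inner x (C *v x)"
  for C :: "complex^'n^'n"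
  by (simp add: matrix_vector_mult_add_rdistrib mat_vec ofreal_smult inner_add_right dot_square_norm)

lemma coercive_exists:
  fixes B :: "complex^'n^'n"
  assumes "pd B"
  shows "\<exists>m>0. \<forall>x. m * (norm x)^2 \<le> inner x (B *v x)"
proof -
  let ?f = "\<lambda>x. inner x (B *v x)"
  have cont: "continuous_on (sphere 0 1) ?f"
    by (intro continuous_intros continuous_on_compose2[OF linear_continuous_on[OF matrix_vector_mul_bounded_linear]]) auto
  have ne: "sphere (0::complex^'n) 1 \<noteq> {}"
  proof -
    obtain i :: 'n where True by auto
    have "norm (axis i (1::complex)) = 1" by simp
    then show ?thesis by auto
  qed
  obtain u where u: "u \<in> sphere 0 1" "\<forall>y\<in>sphere 0 1. ?f u \<le> ?f y"
    using continuous_attains_inf[OF compact_sphere ne cont] by blast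
  have "u \<noteq> 0" using u(1) by auto
  then have mpos: "0 < ?f u" using assms by (auto simp: pd_def re_quad_form[symmetric])
  have "?f u * (norm x)^2 \<le> ?f x" for x
  proof (cases "x = 0")
    case True then show ?thesis by simp
  next
    case False
    define v where "v = (1 / norm x) *\<^sub>R x"
    have v1: "v \<in> sphere 0 1" using False by (simp add: v_def)
    have xv: "x = norm x *\<^sub>R v" using False by (simp add: v_def)
    have "?f x = (norm x)^2 * ?f v"
      by (subst xv, subst xv) (simp add: mv_scaleR power2_eq_square)
    moreover have "?f u \<le> ?f v" using u(2) v1 by blast
    ultimately show ?thesis by (simp add: mult.commute mult_right_mono)
  qed
  then show ?thesis using mpos by blast
qed

lemma shifted:
  fixes C :: "complex^'n^'n"
  assumes herm: "hermitian C" and m: "m > 0" and coer: "\<forall>x. m * (norm x)^2 \<le> inner x (C *v x)"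
    and l: "l \<ge> 0"
  defines "D \<equiv> mat (complex_of_real l) + C"
  shows "invertible D" "hermitian (matrix_inv D)"
    "\<And>x. norm (matrix_inv D *v x) \<le> norm x / (l + m)"
    "\<And>x. (l + m) * (norm x)^2 \<le> inner x (D *v x)"
proof -
  show co: "(l + m) * (norm x)^2 \<le> inner x (D *v x)" for x
    using coer[rule_format, of x] unfolding D_def inner_shift by (simp add: algebra_simps)
  have "\<forall>x. D *v x = 0 \<longrightarrow> x = 0"
  proof (intro allI impI)
    fix x assume "D *v x = 0"
    then have "(l + m) * (norm x)^2 \<le> 0" using co[of x] by simp
    moreover have "l + m > 0" using l m by simp
    ultimately show "x = 0" by (simp add: mult_le_0_iff)
  qed
  then show inv: "invertible D"
    using matrix_left_invertible_ker(1) invertible_left_inverse by blast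
  have hD: "hermitian D" using herm by (simp add: D_def hermitian_def ct_add ct_mat)
  show "hermitian (matrix_inv D)" by (rule hermitian_inv[OF inv hD])
  show "norm (matrix_inv D *v x) \<le> norm x / (l + m)" for x
  proof -
    define y where "y = matrix_inv D *v x"
    have Dy: "D *v y = x" using inv_props(1)[OF inv]
      by (simp add: y_def matrix_vector_mul_assoc)
    have lm: "l + m > 0" using l m by simp
    have "(l + m) * (norm y)^2 \<le> inner y x" using co[of y] Dy by simp
    also have "\<dots> \<le> norm y * norm x" by (rule Cauchy_Schwarz_ineq2[THEN abs_le_D1])
    finally have h: "(l + m) * (norm y)^2 \<le> norm y * norm x" .
    show ?thesis
    proof (cases "y = 0")
      case True then show ?thesis using lm by (simp add: y_def[symmetric])
    next
      case False
      then have "norm y > 0" by simp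
      then have "(l + m) * norm y \<le> norm x" using h by (simp add: power2_eq_square)
      then show ?thesis using lm by (simp add: y_def[symmetric] field_simps)
    qed
  qed
qed

lemma mv_axis: "((M::complex^'n^'n) *v axis j 1) $ i = M $ i $ j"
  by (simp add: matrix_vector_mult_def axis_def if_distrib cong: if_cong)

lemma norm_vec_le_sum: "norm (x::'a::real_normed_vector^'n) \<le> (\<Sum>i\<in>UNIV. norm (x $ i))"
  unfolding norm_vec_def by (rule L2_set_le_sum) simp

lemma mat_norm_bound:
  fixes M :: "complex^'n^'n"
  assumes "\<And>x. norm (M *v x) \<le> K * norm x"
  shows "norm M \<le> real CARD('n) * real CARD('n) * K"
proof -
  have "norm M \<le> (\<Sum>i\<in>UNIV. norm (M $ i))" by (rule norm_vec_le_sum)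
  also have "\<dots> \<le> (\<Sum>i\<in>(UNIV::'n set). \<Sum>j\<in>(UNIV::'n set). K)"
  proof (rule sum_mono)
    fix i
    have "norm (M $ i) \<le> (\<Sum>j\<in>UNIV. norm (M $ i $ j))" by (rule norm_vec_le_sum)
    also have "\<dots> \<le> (\<Sum>j\<in>(UNIV::'n set). K)"
    proof (rule sum_mono)
      fix j
      have "norm (M $ i $ j) = norm ((M *v axis j 1) $ i)" by (simp add: mv_axis)
      also have "\<dots> \<le> norm (M *v axis j 1)" by (rule Finite_Cartesian_Product.norm_nth_le)
      also have "\<dots> \<le> K" using assms[of "axis j 1"] by simp
      finally show "norm (M $ i $ j) \<le> K" .
    qed
    finally show "norm (M $ i) \<le> (\<Sum>j\<in>(UNIV::'n set). K)" .
  qed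
  also have "\<dots> = real CARD('n) * real CARD('n) * K" by simp
  finally show ?thesis .
qed

lemma resolvent_diff:
  fixes C :: "complex^'n^'n"
  assumes "invertible (mat (complex_of_real l) + C)" "invertible (mat (complex_of_real l') + C)"
  shows "matrix_inv (mat (complex_of_real l) + C) *v y - matrix_inv (mat (complex_of_real l') + C) *v y
       = (l' - l) *\<^sub>R (matrix_inv (mat (complex_of_real l) + C) *v (matrix_inv (mat (complex_of_real l') + C) *v y))"
proof -
  define R where "R = matrix_inv (mat (complex_of_real l) + C)"
  define R' where "R' = matrix_inv (mat (complex_of_real l') + C)"
  define z where "z = R' *v y"
  have "(mat (complex_of_real l') + C) *v z = y"
    using inv_props(1)[OF assms(2)] by (simp add: z_def R'_def matrix_vector_mul_assoc)
  then have y: "y = (mat (complex_of_real l) + C) *v z + (l' - l) *\<^sub>R z"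
    by (simp add: matrix_vector_mult_add_rdistrib mat_vec ofreal_smult algebra_simps)
  have Rz: "R *v ((mat (complex_of_real l) + C) *v z) = z"
    using inv_props(2)[OF assms(1)] by (simp add: R_def matrix_vector_mul_assoc)
  have "R *v y = z + (l' - l) *\<^sub>R (R *v z)"
    by (subst y) (simp add: matrix_vector_right_distrib Rz mv_scaleR)
  then show ?thesis by (simp add: R_def[symmetric] R'_def[symmetric] z_def[symmetric])
qed

lemma inv_sq_has_integral:
  fixes m :: real
  assumes m: "m > 0"
  shows "((\<lambda>x. 1 / (x + m)^2) has_integral (1 / m)) {0..}"
proof (rule has_integral_to_inf)
  have fi: "((\<lambda>x. 1 / (x + m)^2) has_integral (1/m - 1/(y + m))) {0..y}" if "y \<ge> 0" for y
  proof -
    have "((\<lambda>x. 1 / (x + m)^2) has_integral ((-1/(y + m)) - (-1/(0 + m)))) {0..y}"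
      using that m
      by (intro fundamental_theorem_of_calculus)
         (auto intro!: derivative_eq_intros simp flip: has_real_derivative_iff_has_vector_derivative
               simp: power2_eq_square field_simps)
    then show ?thesis by simp
  qed
  show "(\<lambda>x. 1 / (x + m)^2) integrable_on {0..y}" for y
  proof (cases "y \<ge> 0")
    case True then show ?thesis using fi by blast
  next
    case False then show ?thesis by (simp add: integrable_on_empty)
  qed
  have "\<forall>\<^sub>F y in at_top. integral {0..y} (\<lambda>x. 1 / (x + m)^2) = 1/m - 1/(y + m)"
    using fi by (meson eventually_at_top_linorderI integral_unique)
  moreover have "((\<lambda>y::real. 1/m - 1/(y + m)) \<longlongrightarrow> 1/m) at_top"
    by real_asymp
  ultimately show "((\<lambda>y. integral {0..y} (\<lambda>x. 1 / (x + m)^2)) \<longlongrightarrow> 1/m) at_top"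
    by (simp add: filterlim_cong tendsto_cong)
qed (use m in auto)

locale coer_setup =
  fixes C A :: "complex^'n^'n" and m KA :: real
  assumes herm: "hermitian C" and m: "m > 0"
    and coer: "\<forall>x. m * (norm x)^2 \<le> inner x (C *v x)"
    and KA: "KA > 0" "\<And>y. norm (A *v y) \<le> norm y * KA"
begin

definition R :: "real \<Rightarrow> complex^'n^'n" where
  "R l = matrix_inv (mat (complex_of_real l) + C)"

definition F :: "real \<Rightarrow> complex^'n^'n" where
  "F l = R l ** A ** R l"

lemma R_inv: "l \<ge> 0 \<Longrightarrow> invertible (mat (complex_of_real l) + C)"
  using shifted(1)[OF herm m coer] by blast

lemma R_bound: "l \<ge> 0 \<Longrightarrow> norm (R l *v x) \<le> norm x / (l + m)"
  unfolding R_def using shifted(3)[OF herm m coer] by blast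

lemma R_bound': "l \<ge> 0 \<Longrightarrow> norm (R l *v x) \<le> norm x / m"
proof -
  assume l: "l \<ge> 0"
  have "norm x / (l + m) \<le> norm x / m" using l m by (simp add: frac_le)
  then show ?thesis using R_bound[OF l, of x] by linarith
qed

lemma R_diff_bound:
  assumes "l \<ge> 0" "l' \<ge> 0"
  shows "norm (R l *v y - R l' *v y) \<le> \<bar>l - l'\<bar> * norm y / (m * m)"
proof -
  have "R l *v y - R l' *v y = (l' - l) *\<^sub>R (R l *v (R l' *v y))"
    unfolding R_def by (rule resolvent_diff[OF R_inv[OF assms(1)] R_inv[OF assms(2)]])
  then have "norm (R l *v y - R l' *v y) = \<bar>l - l'\<bar> * norm (R l *v (R l' *v y))"
    by (simp add: abs_minus_commute)
  also have "\<dots> \<le> \<bar>l - l'\<bar> * (norm y / (m * m))"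
  proof (rule mult_left_mono)
    have "norm (R l *v (R l' *v y)) \<le> norm (R l' *v y) / m" by (rule R_bound'[OF assms(1)])
    also have "\<dots> \<le> (norm y / m) / m" using m R_bound'[OF assms(2), of y] by (intro divide_right_mono) auto
    finally show "norm (R l *v (R l' *v y)) \<le> norm y / (m * m)" by simp
  qed simp
  finally show ?thesis by simp
qed

lemma F_vec: "F l *v x = R l *v (A *v (R l *v x))"
  by (simp add: F_def matrix_vector_mul_assoc matrix_mul_assoc)

lemma F_vec_bound:
  assumes "l \<ge> 0"
  shows "norm (F l *v x) \<le> KA * norm x / (l + m)^2"
proof -
  have lm: "l + m > 0" using assms m by simp
  have "norm (F l *v x) \<le> norm (A *v (R l *v x)) / (l + m)"
    unfolding F_vec by (rule R_bound[OF assms])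
  also have "\<dots> \<le> (norm (R l *v x) * KA) / (l + m)"
    using KA(2) lm by (simp add: divide_right_mono)
  also have "\<dots> \<le> ((norm x / (l + m)) * KA) / (l + m)"
    using R_bound[OF assms] KA(1) lm by (intro divide_right_mono mult_right_mono) auto
  finally show ?thesis by (simp add: power2_eq_square mult.commute)
qed

lemma F_bound:
  assumes "l \<ge> 0"
  shows "norm (F l) \<le> real CARD('n) * real CARD('n) * KA / (l + m)^2"
  using mat_norm_bound[of "F l" "KA / (l + m)^2"] F_vec_bound[OF assms] by simp

lemma F_lipschitz:
  assumes "l \<ge> 0" "l' \<ge> 0"
  shows "norm ((F l - F l') *v x) \<le> (2 * KA / (m * m * m)) * \<bar>l - l'\<bar> * norm x"
proof -
  have eq: "(F l - F l') *v x = (R l *v (A *v (R l *v x)) - R l' *v (A *v (R l *v x)))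
            + R l' *v (A *v (R l *v x - R l' *v x))"
    by (simp add: F_vec matrix_vector_mult_diff_rdistrib matrix_vector_mult_diff_distrib)
  have b1: "norm (R l *v (A *v (R l *v x)) - R l' *v (A *v (R l *v x))) \<le> KA / (m*m*m) * \<bar>l - l'\<bar> * norm x"
  proof -
    have "norm (R l *v (A *v (R l *v x)) - R l' *v (A *v (R l *v x))) \<le> \<bar>l - l'\<bar> * norm (A *v (R l *v x)) / (m * m)"
      by (rule R_diff_bound[OF assms])
    also have "\<dots> \<le> \<bar>l - l'\<bar> * (norm x / m * KA) / (m * m)"
    proof -
      have "norm (A *v (R l *v x)) \<le> norm (R l *v x) * KA" by (rule KA(2))
      also have "\<dots> \<le> norm x / m * KA" using R_bound'[OF assms(1), of x] KA(1) by (intro mult_right_mono) auto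
      finally show ?thesis using m by (intro divide_right_mono mult_left_mono) auto
    qed
    finally show ?thesis by (simp add: field_simps)
  qed
  have b2: "norm (R l' *v (A *v (R l *v x - R l' *v x))) \<le> KA / (m*m*m) * \<bar>l - l'\<bar> * norm x"
  proof -
    have "norm (R l' *v (A *v (R l *v x - R l' *v x))) \<le> norm (A *v (R l *v x - R l' *v x)) / m"
      by (rule R_bound'[OF assms(2)])
    also have "\<dots> \<le> norm (R l *v x - R l' *v x) * KA / m"
      using KA(2) m by (simp add: divide_right_mono)
    also have "\<dots> \<le> (\<bar>l - l'\<bar> * norm x / (m * m)) * KA / m"
      using R_diff_bound[OF assms] KA(1) m by (intro divide_right_mono mult_right_mono) auto
    finally show ?thesis by (simp add: field_simps)
  qed
  show ?thesis unfolding eq using norm_triangle_le[OF add_mono[OF b1 b2]] by (simp add: algebra_simps)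
qed

lemma F_cont: "continuous_on {0..} F"
proof -
  let ?L = "real CARD('n) * real CARD('n) * (2 * KA / (m * m * m))"
  have "?L-lipschitz_on {0..} F"
  proof (rule lipschitz_onI)
    fix l l' :: real assume "l \<in> {0..}" "l' \<in> {0..}"
    then have "norm (F l - F l') \<le> real CARD('n) * real CARD('n) * ((2 * KA / (m * m * m)) * \<bar>l - l'\<bar>)"
      using F_lipschitz by (intro mat_norm_bound) auto
    then show "dist (F l) (F l') \<le> ?L * dist l l'" by (simp add: dist_norm dist_real_def mult_ac)
  next
    show "0 \<le> ?L" using KA m by simp
  qed
  then show ?thesis by (rule lipschitz_on_continuous_on)
qed

lemma F_integrable: "F integrable_on {0..}"
proof -
  let ?c = "real CARD('n) * real CARD('n) * KA"
  have g: "(\<lambda>l. ?c * (1 / (l + m)^2)) integrable_on {0..}"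
    using integrable_cmul[OF has_integral_integrable[OF inv_sq_has_integral[OF m]], of ?c] by simp
  have S: "{0::real..} \<in> sets lebesgue" by simp
  have "F absolutely_integrable_on {0..}"
  proof (rule measurable_bounded_by_integrable_imp_absolutely_integrable[OF _ S g])
    show "F \<in> borel_measurable (lebesgue_on {0..})"
      by (rule continuous_imp_measurable_on_sets_lebesgue[OF F_cont S])
    show "norm (F l) \<le> ?c * (1 / (l + m)^2)" if "l \<in> {0..}" for l
      using F_bound[of l] that by simp
  qed
  then show ?thesis using absolutely_integrable_on_def by blast
qed

end

lemma smat_vec: "((c::real) *\<^sub>R (M::complex^'n^'n)) *v x = c *\<^sub>R (M *v x)"
  by (simp add: vec_eq_iff matrix_vector_mult_def scaleR_sum_right)

lemma psd_integral:
  fixes h :: "real \<Rightarrow> complex^'n^'n"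
  assumes int: "h integrable_on S" and p: "\<And>l. l \<in> S \<Longrightarrow> psd (h l)"
  shows "psd (integral S h)"
  unfolding psd_def
proof (intro conjI allI)
  have "linear (conj_transpose :: complex^'n^'n \<Rightarrow> complex^'n^'n)"
    by (intro linearI) (simp_all add: ct_add ct_scaleR)
  then have bl: "bounded_linear (conj_transpose :: complex^'n^'n \<Rightarrow> complex^'n^'n)"
    using linear_conv_bounded_linear by blast
  have "conj_transpose (integral S h) = integral S (conj_transpose \<circ> h)"
    by (rule integral_linear[OF int bl, symmetric])
  also have "\<dots> = integral S h"
    by (rule integral_cong) (use p in \<open>auto simp: psd_def hermitian_def\<close>)
  finally show "hermitian (integral S h)" by (simp add: hermitian_def)
next
  fix x :: "complex^'n"
  let ?phi = "\<lambda>M::complex^'n^'n. inner x (M *v x)"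
  have "linear ?phi"
    by (intro linearI) (simp_all add: matrix_vector_mult_add_rdistrib inner_add_right smat_vec)
  then have bl: "bounded_linear ?phi"
    using linear_conv_bounded_linear by blast
  have "Re (quad_form (integral S h) x) = ?phi (integral S h)" by (simp add: re_quad_form)
  also have "\<dots> = integral S (?phi \<circ> h)"
    by (rule integral_linear[OF int bl, symmetric])
  also have "\<dots> \<ge> 0"
    by (rule integral_nonneg[OF integrable_linear[OF int bl]])
       (use p in \<open>auto simp: psd_def re_quad_form\<close>)
  finally show "0 \<le> Re (quad_form (integral S h) x)" .
qed

lemma key_identity:
  fixes C D RC RD :: "complex^'n^'n"
  assumes c1: "RC ** C = mat 1" and c2: "C ** RC = mat 1"
    and d1: "RD ** D = mat 1" and d2: "D ** RD = mat 1"
  shows "RC ** (D - C) ** RC - RD ** (D - C) ** RD = (RC - RD) ** (C + D) ** (RC - RD)"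
proof -
  have c1': "RC ** (C ** Y) = Y" for Y using c1 by (simp add: matrix_mul_assoc)
  have c2': "C ** (RC ** Y) = Y" for Y using c2 by (simp add: matrix_mul_assoc)
  have d1': "RD ** (D ** Y) = Y" for Y using d1 by (simp add: matrix_mul_assoc)
  have d2': "D ** (RD ** Y) = Y" for Y using d2 by (simp add: matrix_mul_assoc)
  show ?thesis
    apply (simp only: matrix_add_ldistrib matrix_add_rdistrib matrix_sub_ldistrib matrix_sub_rdistrib
        matrix_mul_assoc[symmetric])
    apply (simp add: c1 c2 d1 d2 c1' c2' d1' d2')
    done
qed

lemma psd_sandwich:
  fixes X M :: "complex^'n^'n"
  assumes "hermitian X" "hermitian M" "\<And>y. 0 \<le> inner y (M *v y)"
  shows "psd (X ** M ** X)"
  unfolding psd_def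
proof (intro conjI allI)
  show "hermitian (X ** M ** X)"
    using assms by (simp add: hermitian_def ct_mult matrix_mul_assoc)
  fix x
  have "quad_form (X ** M ** X) x = quad_form M (X *v x)"
    using quad_form_adj[of X M x] assms(1) by (simp add: hermitian_def)
  then show "0 \<le> Re (quad_form (X ** M ** X) x)" using assms(3) by (simp add: re_quad_form)
qed

theorem mainTheorem3:
  fixes A B :: "complex^'n^'n"
  assumes "psd A" and "pd B"
  shows "loewner_le (mat_quot A (A + B)) (mat_quot A B)"
proof -
  obtain m where m: "m > 0" and coB: "\<forall>x. m * (norm x)^2 \<le> inner x (B *v x)"
    using coercive_exists[OF assms(2)] by blast
  obtain KA where KA: "KA > 0" "\<And>y. norm (A *v y) \<le> norm y * KA"
    using bounded_linear.pos_bounded[OF matrix_vector_mul_bounded_linear[of A]] by blast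
  have hB: "hermitian B" using assms(2) by (simp add: pd_def)
  have hA: "hermitian A" using assms(1) by (simp add: psd_def)
  have hAB: "hermitian (A + B)" using hA hB by (simp add: hermitian_def ct_add)
  have Apos: "0 \<le> inner x (A *v x)" for x
    using assms(1) by (simp add: psd_def re_quad_form)
  have coAB: "\<forall>x. m * (norm x)^2 \<le> inner x ((A + B) *v x)"
    using coB Apos by (simp add: matrix_vector_mult_add_rdistrib inner_add_right add_increasing)
  interpret I1: coer_setup B A m KA using hB m coB KA by unfold_locales auto
  interpret I2: coer_setup "A + B" A m KA using hAB m coAB KA by unfold_locales auto
  have q1: "mat_quot A B = integral {0..} I1.F"
    unfolding mat_quot_def I1.F_def[abs_def] I1.R_def ..
  have q2: "mat_quot A (A + B) = integral {0..} I2.F"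
    unfolding mat_quot_def I2.F_def[abs_def] I2.R_def ..
  have pw: "psd (I1.F l - I2.F l)" if l: "l \<in> {0..}" for l
  proof -
    have l0: "l \<ge> 0" using l by simp
    define C where "C = mat (complex_of_real l) + B"
    define D where "D = mat (complex_of_real l) + (A + B)"
    have iC: "invertible C" using shifted(1)[OF hB m coB l0] by (simp add: C_def)
    have iD: "invertible D" using shifted(1)[OF hAB m coAB l0] by (simp add: D_def)
    have hRC: "hermitian (matrix_inv C)" using shifted(2)[OF hB m coB l0] by (simp add: C_def)
    have hRD: "hermitian (matrix_inv D)" using shifted(2)[OF hAB m coAB l0] by (simp add: D_def)
    have DC: "D - C = A" by (simp add: C_def D_def)
    have eq: "I1.F l - I2.F l = (matrix_inv C - matrix_inv D) ** (C + D) ** (matrix_inv C - matrix_inv D)"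
      using key_identity[OF inv_props(2)[OF iC] inv_props(1)[OF iC] inv_props(2)[OF iD] inv_props(1)[OF iD]]
      unfolding DC I1.F_def I2.F_def I1.R_def I2.R_def C_def D_def by simp
    have hX: "hermitian (matrix_inv C - matrix_inv D)"
      using hRC hRD by (simp add: hermitian_def ct_diff)
    have hM: "hermitian (C + D)"
      using hA hB unfolding hermitian_def C_def D_def ct_add ct_mat by simp
    have pM: "0 \<le> inner y ((C + D) *v y)" for y
    proof -
      have "(l + m) * (norm y)^2 \<le> inner y (C *v y)" using shifted(4)[OF hB m coB l0] by (simp add: C_def)
      moreover have "(l + m) * (norm y)^2 \<le> inner y (D *v y)" using shifted(4)[OF hAB m coAB l0] by (simp add: D_def)
      moreover have "0 \<le> (l + m) * (norm y)^2" using l0 m by simp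
      ultimately show ?thesis by (simp add: matrix_vector_mult_add_rdistrib inner_add_right)
    qed
    show ?thesis unfolding eq by (rule psd_sandwich[OF hX hM pM])
  qed
  have "psd (integral {0..} (\<lambda>l. I1.F l - I2.F l))"
    by (rule psd_integral[OF integrable_diff[OF I1.F_integrable I2.F_integrable] pw])
  then show ?thesis
    unfolding loewner_le_def q1 q2 using integral_diff[OF I1.F_integrable I2.F_integrable] by simp
qed

end
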